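(* Let $C_\bullet(\theta)$ be the chain complex with $C_n(\theta)=\mathrm{id}_{\mathcal O}\otimes_R B_+^{\otimes_R n}\otimes_R\mathrm{id}_L$ and differential $d(a_1\otimes\cdots\otimes a_n)=\sum_{i=1}^{n-1}(-1)^i a_1\otimes\cdots\otimes a_ia_{i+1}\otimes\cdots\otimes a_n$, and $C_\bullet^{(m)}(\theta)$ its subcomplex of internal degree $m$. Then for all $n\ge1$: $H_n(C_\bullet^{(n-1)}(\theta))\cong k$ for $n\in\{1,2\}$ and $0$ otherwise; $H_n(C_\bullet^{(n-2)}(\theta))\cong k$ for $n\in\{5,6\}$ and $0$ otherwise; $H_n(C_\bullet^{(n-3)}(\theta))\cong k$ for $n\in\{9,10\}$ and $0$ otherwise; $H_n(C_\bullet^{(n-4)}(\theta))\cong k$ for $n\in\{13,14\}$ and $0$ otherwise.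
   Context: Let $k$ be a field with $\operatorname{char}k\neq2,3$. Let $B$ be the graded $k$-algebra with $k$-basis $\mathrm{id}_L,\mathrm{id}_{\mathcal O},\theta$ (degree $0$) and $\eta,\xi,\xi_L$ (degree $1$), whose only nonzero products of basis elements are $\mathrm{id}_L\mathrm{id}_L=\mathrm{id}_L$, $\mathrm{id}_{\mathcal O}\mathrm{id}_{\mathcal O}=\mathrm{id}_{\mathcal O}$, $\mathrm{id}_L\xi_L=\xi_L\mathrm{id}_L=\xi_L$, $\mathrm{id}_{\mathcal O}\xi=\xi\mathrm{id}_{\mathcal O}=\xi$, $\mathrm{id}_L\eta=\eta\,\mathrm{id}_{\mathcal O}=\eta$, $\mathrm{id}_{\mathcal O}\theta=\theta\,\mathrm{id}_L=\theta$, $\theta\eta=\xi$, $\eta\theta=\xi_L$. Let $R=k\langle\mathrm{id}_L,\mathrm{id}_{\mathcal O}\rangle$ and $B_+=\langle\theta,\eta,\xi,\xi_L\rangle$; tensor products are over $R$. Thus $B_+^{\otimes_R n}$ has $k$-basis the words $a_1\otimes\cdots\otimes a_n$, $a_i\in\{\theta,\eta,\xi,\xi_L\}$, with the right idempotent of $a_i$ equal to the left idempotent of $a_{i+1}$, where (left, right) idempotents are $\theta:(\mathrm{id}_{\mathcal O},\mathrm{id}_L)$, $\eta:(\mathrm{id}_L,\mathrm{id}_{\mathcal O})$, $\xi:(\mathrm{id}_{\mathcal O},\mathrm{id}_{\mathcal O})$, $\xi_L:(\mathrm{id}_L,\mathrm{id}_L)$; $\mathrm{id}_{\mathcal O}\otimes(\cdot)\otimes\mathrm{id}_L$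 selects words whose first letter has left idempotent $\mathrm{id}_{\mathcal O}$ and last letter right idempotent $\mathrm{id}_L$. Internal degree of a word is the sum of the degrees of its letters. *)

theory Defs
  imports Complex_Main "HOL-Library.Function_Algebras"
begin

text \<open>The two idempotents of R and the four basis letters of B_+.\<close>
datatype idem = IdL | IdO
datatype letter = Theta | Eta | Xi | XiL

fun lidem :: "letter \<Rightarrow> idem" where
  "lidem Theta = IdO" | "lidem Eta = IdL" | "lidem Xi = IdO" | "lidem XiL = IdL"

fun ridem :: "letter \<Rightarrow> idem" where
  "ridem Theta = IdL" | "ridem Eta = IdO" | "ridem Xi = IdO" | "ridem XiL = IdL"

fun ldeg :: "letter \<Rightarrow> nat" where
  "ldeg Theta = 0" | "ldeg Eta = 1" | "ldeg Xi = 1" | "ldeg XiL = 1"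

text \<open>Product of two letters in B_+ (None = zero): theta eta = xi, eta theta = xi_L.\<close>
fun lmult :: "letter \<Rightarrow> letter \<Rightarrow> letter option" where
  "lmult Theta Eta = Some Xi"
| "lmult Eta Theta = Some XiL"
| "lmult _ _ = None"

text \<open>Words a_1 ... a_n forming a basis element of B_+^{tensor_R n} (composable).\<close>
definition composable :: "letter list \<Rightarrow> bool" where
  "composable w \<longleftrightarrow> (\<forall>i. Suc i < length w \<longrightarrow> ridem (w ! i) = lidem (w ! Suc i))"

definition wdeg :: "letter list \<Rightarrow> nat" where
  "wdeg w = sum_list (map ldeg w)"

text \<open>Basis of C_n^{(m)}(theta) = id_O (B_+)^{tensor n} id_L in internal degree m.
  (For n = 0 this is id_O R id_L = 0, i.e. the empty basis.)\<close>
definition cbasis :: "nat \<Rightarrow> nat \<Rightarrow> letter list set" where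
  "cbasis n m = {w. length w = n \<and> w \<noteq> [] \<and> composable w \<and>
                    lidem (hd w) = IdO \<and> ridem (last w) = IdL \<and> wdeg w = m}"

text \<open>Contraction of the letters at positions i, i+1 (1-based), if the product is nonzero.\<close>
definition contract :: "letter list \<Rightarrow> nat \<Rightarrow> letter list option" where
  "contract w i = (case lmult (w ! (i - 1)) (w ! i) of
                     None \<Rightarrow> None
                   | Some c \<Rightarrow> Some (take (i - 1) w @ [c] @ drop (i + 1) w))"

definition dcoef :: "letter list \<Rightarrow> letter list \<Rightarrow> 'k::field" where
  "dcoef w u = (\<Sum>i\<in>{1..<length w}. (if contract w i = Some u then (-1) ^ i else 0))"

definition chains :: "nat \<Rightarrow> nat \<Rightarrow> (letter list \<Rightarrow> 'k::field) set" where
  "chains n m = {f. \<forall>w. f w \<noteq> 0 \<longrightarrow> w \<in> cbasis n m}"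

definition dif :: "nat \<Rightarrow> nat \<Rightarrow> (letter list \<Rightarrow> 'k::field) \<Rightarrow> (letter list \<Rightarrow> 'k)" where
  "dif n m f = (\<lambda>u. \<Sum>w\<in>cbasis n m. f w * dcoef w u)"

definition fscale :: "'k::field \<Rightarrow> (letter list \<Rightarrow> 'k) \<Rightarrow> (letter list \<Rightarrow> 'k)" where
  "fscale c f = (\<lambda>w. c * f w)"

lemma vector_space_fscale: "vector_space fscale"
  by unfold_locales (simp_all add: fscale_def fun_eq_iff plus_fun_def algebra_simps)

definition cycles :: "nat \<Rightarrow> nat \<Rightarrow> (letter list \<Rightarrow> 'k::field) set" where
  "cycles n m = {f \<in> chains n m. dif n m f = 0}"

definition boundaries :: "nat \<Rightarrow> nat \<Rightarrow> (letter list \<Rightarrow> 'k::field) set" where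
  "boundaries n m = dif (Suc n) m ` chains (Suc n) m"

text \<open>dim_k H_n(C^{(m)}(theta)) = dim Z_n - dim B_n (all spaces are finite-dimensional
  and B_n is a subspace of Z_n).\<close>
definition homology_dim :: "'k::field itself \<Rightarrow> nat \<Rightarrow> nat \<Rightarrow> nat" where
  "homology_dim TYPE('k) n m =
     vector_space.dim (fscale :: 'k \<Rightarrow> _) (cycles n m :: (letter list \<Rightarrow> 'k) set)
     - vector_space.dim (fscale :: 'k \<Rightarrow> _) (boundaries n m :: (letter list \<Rightarrow> 'k) set)"

end

theory Submission
  imports Defs
begin

fun plen :: "letter \<Rightarrow> nat" where
  "plen Theta = 1" | "plen Eta = 1" | "plen Xi = 2" | "plen XiL = 2"

definition plens :: "letter list \<Rightarrow> nat" where "plens w = sum_list (map plen w)"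

lemma plens_Nil[simp]: "plens [] = 0" and plens_Cons[simp]: "plens (x#r) = plen x + plens r"
  by (simp_all add: plens_def)

fun flp :: "idem \<Rightarrow> idem" where "flp IdL = IdO" | "flp IdO = IdL"
fun la :: "idem \<Rightarrow> letter" where "la IdO = Theta" | "la IdL = Eta"
fun lc :: "idem \<Rightarrow> letter" where "lc IdO = Xi" | "lc IdL = XiL"

lemma flp_flp[simp]: "flp (flp s) = s" by (cases s) auto
lemma lidem_la[simp]: "lidem (la s) = s" by (cases s) auto
lemma ridem_la[simp]: "ridem (la s) = flp s" by (cases s) auto
lemma lidem_lc[simp]: "lidem (lc s) = s" by (cases s) auto
lemma ridem_lc[simp]: "ridem (lc s) = s" by (cases s) auto
lemma plen_la[simp]: "plen (la s) = 1" by (cases s) auto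
lemma plen_lc[simp]: "plen (lc s) = 2" by (cases s) auto
lemma la_ne_lc[simp]: "la s \<noteq> lc t" "lc t \<noteq> la s" by (cases s; cases t; auto)+
lemma la_inj[simp]: "(la s = la t) = (s = t)" by (cases s; cases t; auto)
lemma lc_inj[simp]: "(lc s = lc t) = (s = t)" by (cases s; cases t; auto)
lemma flp_ne[simp]: "flp s \<noteq> s" "s \<noteq> flp s" by (cases s; auto)+
lemma lmult_ab[simp]: "lmult (la s) (la (flp s)) = Some (lc s)" by (cases s) auto
lemma lmult_lc1[simp]: "lmult (lc s) y = None" by (cases s; cases y; auto)
lemma lmult_lc2[simp]: "lmult x (lc s) = None" by (cases s; cases x; auto)
lemma letter_cases_lidem: "lidem x = s \<Longrightarrow> x = la s \<or> x = lc s"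
  by (cases x; cases s; auto)
lemma lmult_Some: "lmult x y = Some c \<Longrightarrow> lidem c = lidem x \<and> ridem c = ridem y
   \<and> plen c = plen x + plen y \<and> (\<forall>z. lmult c z = None \<and> lmult z c = None) \<and> c \<noteq> x"
  by (cases x; cases y; auto)
lemma lmult_None_res: "lmult x y = Some c \<Longrightarrow> lmult c z = None"
  by (cases x; cases y; cases z; auto)
lemma lmult_None_res2: "lmult x y = Some c \<Longrightarrow> lmult z c = None"
  by (cases x; cases y; cases z; auto)

lemma composable_Nil[simp]: "composable []" by (simp add: composable_def)
lemma composable_single[simp]: "composable [x]" by (simp add: composable_def)
lemma composable_Cons: "composable (x#r) \<longleftrightarrow> (r \<noteq> [] \<longrightarrow> ridem x = lidem (hd r)) \<and> composable r"
proof
  assume H: "composable (x#r)"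
  have 1: "r \<noteq> [] \<longrightarrow> ridem x = lidem (hd r)"
    using H unfolding composable_def by (auto simp: hd_conv_nth elim!: allE[of _ 0])
  have "composable r" unfolding composable_def
  proof (intro allI impI)
    fix i assume "Suc i < length r"
    then show "ridem (r ! i) = lidem (r ! Suc i)"
      using H unfolding composable_def by (auto elim!: allE[of _ "Suc i"])
  qed
  with 1 show "(r \<noteq> [] \<longrightarrow> ridem x = lidem (hd r)) \<and> composable r" by blast
next
  assume H: "(r \<noteq> [] \<longrightarrow> ridem x = lidem (hd r)) \<and> composable r"
  show "composable (x#r)" unfolding composable_def
  proof (intro allI impI)
    fix i assume "Suc i < length (x#r)"
    then show "ridem ((x#r) ! i) = lidem ((x#r) ! Suc i)"
      using H unfolding composable_def by (cases i) (auto simp: hd_conv_nth)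
  qed
qed

fun dd :: "letter list \<Rightarrow> (letter list \<times> int) list" where
  "dd (x#y#r) = (case lmult x y of Some c \<Rightarrow> [(c#r, -1)] | None \<Rightarrow> []) @ map (\<lambda>(v,e). (x#v, -e)) (dd (y#r))"
| "dd _ = []"

definition dsum :: "(letter list \<times> int) list \<Rightarrow> letter list \<Rightarrow> 'k::field" where
  "dsum xs u = sum_list (map (\<lambda>(v,e). if v = u then of_int e else 0) xs)"

definition shiftc :: "letter \<Rightarrow> (letter list \<Rightarrow> 'k::field) \<Rightarrow> letter list \<Rightarrow> 'k" where
  "shiftc x F u = (case u of [] \<Rightarrow> 0 | y#u' \<Rightarrow> if y = x then F u' else 0)"

lemma dsum_Nil[simp]: "dsum [] u = 0" by (simp add: dsum_def)
lemma dsum_append[simp]: "dsum (xs @ ys) u = dsum xs u + dsum ys u" by (simp add: dsum_def)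
lemma dsum_map: "dsum (map (\<lambda>(v,e). (x#v, -e)) xs) u = - shiftc x (dsum xs) u"
  by (induction xs) (auto simp: dsum_def shiftc_def split: list.split)

lemma contract_1: "contract (x#y#r) (Suc 0) = map_option (\<lambda>c. c#r) (lmult x y)"
  by (simp add: contract_def split: option.split)
lemma contract_Suc: "1 \<le> i \<Longrightarrow> contract (x#w) (Suc i) = map_option (Cons x) (contract w i)"
  by (cases i) (auto simp: contract_def split: option.split)

lemma dcoef_short: "length w \<le> 1 \<Longrightarrow> dcoef w u = 0"
  by (simp add: dcoef_def)

lemma dcoef_dd: "(dcoef w u :: 'k::field) = dsum (dd w) u"
proof (induction w arbitrary: u rule: dd.induct)
  case (1 x y r)
  have "(dcoef (x#y#r) u :: 'k) = (\<Sum>i\<in>{1..<Suc (length (y#r))}. (if contract (x#y#r) i = Some u then (-1) ^ i else 0))"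
    by (simp add: dcoef_def)
  also have "\<dots> = (if contract (x#y#r) 1 = Some u then -1 else 0)
       + (\<Sum>i\<in>{1..<length (y#r)}. (if contract (x#y#r) (Suc i) = Some u then (-1) ^ Suc i else 0))"
    by (simp add: sum.atLeast_Suc_lessThan sum.shift_bounds_Suc_ivl del: sum.op_ivl_Suc)
  also have "(\<Sum>i\<in>{1..<length (y#r)}. (if contract (x#y#r) (Suc i) = Some u then (-1) ^ Suc i else 0))
      = (\<Sum>i\<in>{1..<length (y#r)}. - (shiftc x (\<lambda>u'. if contract (y#r) i = Some u' then (-1) ^ i else 0) u))"
    by (rule sum.cong) (auto simp: contract_Suc shiftc_def split: list.split)
  also have "\<dots> = - shiftc x (dcoef (y#r)) u"
    by (auto simp: dcoef_def shiftc_def sum_negf split: list.split)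
  finally have C: "(dcoef (x#y#r) u :: 'k) = (if contract (x#y#r) 1 = Some u then -1 else 0) - shiftc x (dcoef (y#r)) u"
    by simp
  have IH: "(dcoef (y#r) :: _ \<Rightarrow> 'k) = dsum (dd (y#r))" using "1.IH" by (simp add: fun_eq_iff)
  have D: "(dsum (dd (x#y#r)) u :: 'k) = dsum (case lmult x y of Some c \<Rightarrow> [(c#r,-1)] | None \<Rightarrow> []) u
      - shiftc x (dsum (dd (y#r))) u"
    by (simp only: dd.simps dsum_append dsum_map) simp
  show ?case using C D IH by (auto simp: contract_1 dsum_def split: option.split)
qed (auto simp: dcoef_def)

definition D1 :: "letter \<Rightarrow> letter list \<Rightarrow> letter list \<Rightarrow> 'k::field" where
  "D1 x w u = (case w of [] \<Rightarrow> 0 | y#r \<Rightarrow> (case lmult x y of None \<Rightarrow> 0 | Some c \<Rightarrow> if u = c#r then -1 else 0))"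

lemma dcoef_Nil[simp]: "dcoef [] u = 0" and dcoef_single[simp]: "dcoef [x] u = 0"
  by (simp_all add: dcoef_def)

lemma shiftc_zero[simp]: "shiftc x (\<lambda>_. 0) u = 0" by (simp add: shiftc_def split: list.split)

lemma dcoef_Cons: "(dcoef (x#w) u :: 'k::field) = D1 x w u - shiftc x (dcoef w) u"
proof (cases w)
  case Nil then show ?thesis by (simp add: D1_def shiftc_def split: list.split)
next
  case (Cons y r)
  have IH: "(dcoef (y#r) :: _ \<Rightarrow> 'k) = dsum (dd (y#r))" by (simp add: fun_eq_iff dcoef_dd)
  have "(dcoef (x#y#r) u :: 'k) = dsum (case lmult x y of Some c \<Rightarrow> [(c#r,-1)] | None \<Rightarrow> []) u
      - shiftc x (dsum (dd (y#r))) u"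
    unfolding dcoef_dd by (simp only: dd.simps dsum_append dsum_map) simp
  then show ?thesis using Cons IH by (auto simp: D1_def dsum_def split: option.split)
qed

lemma dcoef_same: "(dcoef (x#w) (x#u) :: 'k::field) = - dcoef w u"
  by (auto simp: dcoef_Cons D1_def shiftc_def dest: lmult_Some split: list.split option.split)

lemma D1_res: assumes "lmult x y = Some c" shows "D1 c r u = 0"
proof -
  have "\<forall>z. lmult c z = None" using assms by (cases x; cases y; auto)
  then show ?thesis by (simp add: D1_def split: list.split)
qed

lemma D1_lc[simp]: "D1 (lc s) r u = 0" by (simp add: D1_def split: list.split)

lemma dcoef_lc: "(dcoef (lc s # r) u :: 'k::field) = - shiftc (lc s) (dcoef r) u"
  by (simp add: dcoef_Cons)

lemma shiftc_sum: "sum_list (map (\<lambda>(v,e). of_int e * shiftc x (dcoef v) u) xs)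
   = shiftc x (\<lambda>u'. sum_list (map (\<lambda>(v,e). of_int e * (dcoef v u' :: 'k::field)) xs)) u"
  by (induction xs) (auto simp: shiftc_def split: list.split)

lemma shiftc_dsum: "sum_list (map (\<lambda>(v,e). of_int e * (if u = c#v then 1 else 0)) xs)
   = shiftc c (dsum xs) (u :: letter list) * (1::'k::field)"
  by (induction xs) (auto simp: shiftc_def dsum_def split: list.split)

lemma step3: "sum_list (map (\<lambda>(v,e). of_int e * (D1 x v u :: 'k::field)) (dd (y#r)))
   = (case lmult x y of Some c \<Rightarrow> shiftc c (dcoef r) u | None \<Rightarrow> 0)"
proof (cases r)
  case Nil then show ?thesis by (simp add: shiftc_def split: option.split list.split)
next
  case (Cons z r')
  have H: "sum_list (map (\<lambda>(v,e). of_int e * (D1 x v u :: 'k)) (case lmult y z of Some c \<Rightarrow> [(c#r',-1)] | None \<Rightarrow> [])) = 0"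
    by (cases "lmult y z") (auto simp: D1_def lmult_None_res2)
  have M: "sum_list (map (\<lambda>(v,e). of_int e * (D1 x v u :: 'k)) (map (\<lambda>(v,e). (y#v, -e)) (dd (z#r'))))
     = (case lmult x y of Some c \<Rightarrow> shiftc c (dsum (dd (z#r'))) u | None \<Rightarrow> 0)"
  proof (cases "lmult x y")
    case None
    have "sum_list (map (\<lambda>(v,e). of_int e * (D1 x v u :: 'k)) (map (\<lambda>(v,e). (y#v, -e)) xs)) = 0" for xs
      by (induction xs) (auto simp: D1_def None)
    then show ?thesis using None by simp
  next
    case (Some c)
    have "sum_list (map (\<lambda>(v,e). of_int e * (D1 x v u :: 'k)) (map (\<lambda>(v,e). (y#v, -e)) xs))
      = sum_list (map (\<lambda>(v,e). of_int e * (if u = c#v then 1 else 0)) xs)" for xs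
      by (induction xs) (auto simp: D1_def Some)
    then show ?thesis using shiftc_dsum[of u c] Some by simp
  qed
  have EQ: "(dcoef (z#r') :: _ \<Rightarrow> 'k) = dsum (dd (z#r'))" by (simp add: fun_eq_iff dcoef_dd)
  show ?thesis unfolding Cons dd.simps(1)[of y z r'] map_append sum_list_append H M
    by (simp only: EQ) simp
qed

lemma ddT: "sum_list (map (\<lambda>(v,e). of_int e * (dcoef v u :: 'k::field)) (dd w)) = 0"
proof (induction w arbitrary: u rule: dd.induct)
  case (1 x y r)
  have IH: "(\<lambda>u'. sum_list (map (\<lambda>(v,e). of_int e * (dcoef v u' :: 'k)) (dd (y#r)))) = (\<lambda>_. 0)"
    using "1.IH" by (simp add: fun_eq_iff)
  have A: "sum_list (map (\<lambda>(v,e). of_int e * (dcoef v u :: 'k)) (map (\<lambda>(v,e). (x#v, -e)) (dd (y#r))))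
     = - sum_list (map (\<lambda>(v,e). of_int e * (D1 x v u :: 'k)) (dd (y#r)))
       + sum_list (map (\<lambda>(v,e). of_int e * shiftc x (dcoef v) u) (dd (y#r)))"
  proof -
    have "sum_list (map (\<lambda>(v,e). of_int e * (dcoef v u :: 'k)) (map (\<lambda>(v,e). (x#v, -e)) xs))
     = - sum_list (map (\<lambda>(v,e). of_int e * (D1 x v u :: 'k)) xs)
       + sum_list (map (\<lambda>(v,e). of_int e * shiftc x (dcoef v) u) xs)" for xs
      by (induction xs) (auto simp: dcoef_Cons algebra_simps)
    then show ?thesis .
  qed
  have B: "sum_list (map (\<lambda>(v,e). of_int e * shiftc x (dcoef v) u) (dd (y#r))) = (0::'k)"
    unfolding shiftc_sum IH by simp
  have H: "sum_list (map (\<lambda>(v,e). of_int e * (dcoef v u :: 'k)) (case lmult x y of Some c \<Rightarrow> [(c#r,-1)] | None \<Rightarrow> []))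
     = (case lmult x y of Some c \<Rightarrow> shiftc c (dcoef r) u | None \<Rightarrow> 0)"
    by (cases "lmult x y") (auto simp: dcoef_Cons D1_res)
  show ?case unfolding dd.simps(1) map_append sum_list_append A B H step3 by simp
qed auto

lemma dd_mem: "(v,e) \<in> set (dd w) \<Longrightarrow> composable w \<Longrightarrow>
   length v + 1 = length w \<and> plens v = plens w \<and> composable v \<and> v \<noteq> [] \<and> lidem (hd v) = lidem (hd w)"
proof (induction w arbitrary: v e rule: dd.induct)
  case (1 x y r)
  have cx: "ridem x = lidem y" and cyr: "composable (y#r)" using "1.prems"(2) by (simp_all add: composable_Cons)
  from "1.prems"(1) consider (a) c where "lmult x y = Some c" "v = c#r"
    | (b) v' e' where "(v',e') \<in> set (dd (y#r))" "v = x#v'"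
    by (cases "lmult x y") fastforce+
  then show ?case
  proof cases
    case a
    then show ?thesis using lmult_Some[OF a(1)] cyr by (auto simp: composable_Cons)
  next
    case b
    then show ?thesis using "1.IH"[OF b(1) cyr] cx by (auto simp: composable_Cons)
  qed
qed auto

lemma UNIV_letter: "(UNIV :: letter set) = {Theta, Eta, Xi, XiL}"
  apply (rule set_eqI) subgoal for x by (cases x) auto done

definition GB :: "idem \<Rightarrow> nat \<Rightarrow> nat \<Rightarrow> letter list set" where
  "GB s L n = {w. length w = n \<and> composable w \<and> (w \<noteq> [] \<longrightarrow> lidem (hd w) = s) \<and> plens w = L}"
definition Gchains :: "idem \<Rightarrow> nat \<Rightarrow> nat \<Rightarrow> (letter list \<Rightarrow> 'k::field) set" where
  "Gchains s L n = {f. \<forall>w. f w \<noteq> 0 \<longrightarrow> w \<in> GB s L n}"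
definition Gdif :: "idem \<Rightarrow> nat \<Rightarrow> nat \<Rightarrow> (letter list \<Rightarrow> 'k::field) \<Rightarrow> (letter list \<Rightarrow> 'k)" where
  "Gdif s L n f = (\<lambda>u. \<Sum>w\<in>GB s L n. f w * dcoef w u)"
definition Gcyc :: "idem \<Rightarrow> nat \<Rightarrow> nat \<Rightarrow> (letter list \<Rightarrow> 'k::field) set" where
  "Gcyc s L n = {f \<in> Gchains s L n. Gdif s L n f = 0}"
definition Gbnd :: "idem \<Rightarrow> nat \<Rightarrow> nat \<Rightarrow> (letter list \<Rightarrow> 'k::field) set" where
  "Gbnd s L n = Gdif s L (Suc n) ` Gchains s L (Suc n)"

lemma finite_GB[simp]: "finite (GB s L n)"
proof -
  have "GB s L n \<subseteq> {w. set w \<subseteq> UNIV \<and> length w = n}" by (auto simp: GB_def)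
  moreover have "finite {w. set w \<subseteq> (UNIV::letter set) \<and> length w = n}"
    by (rule finite_lists_length_eq) (simp add: UNIV_letter)
  ultimately show ?thesis by (rule finite_subset)
qed

lemma GB_dd: "w \<in> GB s L (Suc k) \<Longrightarrow> (v,e) \<in> set (dd w) \<Longrightarrow> v \<in> GB s L k"
  using dd_mem[of v e w] by (auto simp: GB_def)

lemma dsum_nz: "dsum xs u \<noteq> (0::'k::field) \<Longrightarrow> \<exists>e. (u,e) \<in> set xs"
  by (induction xs) (auto simp: dsum_def split: if_splits)

lemma dcoef_nz: "(dcoef w u :: 'k::field) \<noteq> 0 \<Longrightarrow> \<exists>e. (u,e) \<in> set (dd w)"
  using dsum_nz[of "dd w" u] by (simp add: dcoef_dd)

lemma Gdif_chains: "Gdif s L (Suc k) F \<in> Gchains s L k"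
  unfolding Gchains_def
proof (intro CollectI allI impI)
  fix u assume "Gdif s L (Suc k) F u \<noteq> 0"
  then obtain w where w: "w \<in> GB s L (Suc k)" "F w * dcoef w u \<noteq> (0::'a)"
    unfolding Gdif_def using sum.not_neutral_contains_not_neutral by blast
  then have "w \<in> GB s L (Suc k)" "dcoef w u \<noteq> (0::'a)" by auto
  then show "u \<in> GB s L k" using dcoef_nz GB_dd by metis
qed

lemma sum_dsum: "finite V \<Longrightarrow> \<forall>(v,e)\<in>set xs. v \<in> V \<Longrightarrow>
  (\<Sum>v\<in>V. dsum xs v * G v) = sum_list (map (\<lambda>(v,e). of_int e * (G v :: 'k::field)) xs)"
proof (induction xs)
  case Nil then show ?case by simp
next
  case (Cons p xs)
  obtain v0 e0 where p: "p = (v0,e0)" by force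
  have "(\<Sum>v\<in>V. dsum (p#xs) v * G v) = (\<Sum>v\<in>V. (if v0 = v then of_int e0 * G v else 0) + dsum xs v * G v)"
    by (rule sum.cong) (auto simp: p dsum_def algebra_simps)
  also have "\<dots> = (\<Sum>v\<in>V. (if v0 = v then of_int e0 * G v else 0)) + (\<Sum>v\<in>V. dsum xs v * G v)"
    by (rule sum.distrib)
  also have "\<dots> = of_int e0 * G v0 + sum_list (map (\<lambda>(v,e). of_int e * (G v :: 'k::field)) xs)"
    using Cons by (simp add: p)
  finally show ?case by (simp add: p)
qed

lemma Gdif_Gdif: "Gdif s L k (Gdif s L (Suc k) F) = (0 :: letter list \<Rightarrow> 'k::field)"
proof
  fix u
  have "Gdif s L k (Gdif s L (Suc k) F) u
     = (\<Sum>v\<in>GB s L k. (\<Sum>w\<in>GB s L (Suc k). F w * dcoef w v) * dcoef v u)"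
    by (simp add: Gdif_def)
  also have "\<dots> = (\<Sum>v\<in>GB s L k. \<Sum>w\<in>GB s L (Suc k). F w * dcoef w v * dcoef v u)"
    by (simp add: sum_distrib_right)
  also have "\<dots> = (\<Sum>w\<in>GB s L (Suc k). \<Sum>v\<in>GB s L k. F w * dcoef w v * dcoef v u)"
    by (rule sum.swap)
  also have "\<dots> = (\<Sum>w\<in>GB s L (Suc k). F w * (\<Sum>v\<in>GB s L k. dcoef w v * dcoef v u))"
    by (simp add: sum_distrib_left mult.assoc)
  also have "\<dots> = (\<Sum>w\<in>GB s L (Suc k). F w * 0)"
  proof (rule sum.cong[OF refl])
    fix w assume w: "w \<in> GB s L (Suc k)"
    have "(\<Sum>v\<in>GB s L k. dcoef w v * (dcoef v u :: 'k)) = (\<Sum>v\<in>GB s L k. dsum (dd w) v * dcoef v u)"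
      by (simp add: dcoef_dd)
    also have "\<dots> = sum_list (map (\<lambda>(v,e). of_int e * (dcoef v u :: 'k)) (dd w))"
      by (rule sum_dsum) (use w GB_dd in auto)
    also have "\<dots> = 0" by (rule ddT)
    finally show "F w * (\<Sum>v\<in>GB s L k. dcoef w v * dcoef v u) = F w * 0" by simp
  qed
  finally show "Gdif s L k (Gdif s L (Suc k) F) u = 0 u" by simp
qed

lemma Gdif_add: "Gdif s L k (f + g) = Gdif s L k f + (Gdif s L k g :: _ \<Rightarrow> 'k::field)"
  by (simp add: Gdif_def fun_eq_iff sum.distrib algebra_simps)
lemma Gdif_diff: "Gdif s L k (f - g) = Gdif s L k f - (Gdif s L k g :: _ \<Rightarrow> 'k::field)"
  by (simp add: Gdif_def fun_eq_iff sum_subtractf algebra_simps)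
lemma Gdif_uminus: "Gdif s L k (- f) = - (Gdif s L k f :: _ \<Rightarrow> 'k::field)"
  by (simp add: Gdif_def fun_eq_iff sum_negf)
lemma Gdif_scale: "Gdif s L k (fscale c f) = fscale c (Gdif s L k f :: _ \<Rightarrow> 'k::field)"
  by (simp add: Gdif_def fscale_def fun_eq_iff sum_distrib_left algebra_simps)
lemma Gdif_zero[simp]: "Gdif s L k 0 = (0 :: _ \<Rightarrow> 'k::field)"
  by (simp add: Gdif_def fun_eq_iff)

lemma Gchains_iff: "f \<in> Gchains s L k \<longleftrightarrow> (\<forall>w. w \<notin> GB s L k \<longrightarrow> f w = 0)"
  by (auto simp: Gchains_def)

lemma Gchains_zero[simp]: "0 \<in> Gchains s L k" by (simp add: Gchains_def)
lemma Gchains_add: "f \<in> Gchains s L k \<Longrightarrow> g \<in> Gchains s L k \<Longrightarrow> f + g \<in> Gchains s L k"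
  by (auto simp: Gchains_iff)
lemma Gchains_diff: "f \<in> Gchains s L k \<Longrightarrow> g \<in> Gchains s L k \<Longrightarrow> f - g \<in> Gchains s L k"
  by (auto simp: Gchains_iff)
lemma Gchains_uminus: "f \<in> Gchains s L k \<Longrightarrow> - f \<in> Gchains s L k"
  by (auto simp: Gchains_def)
lemma Gchains_scale: "f \<in> Gchains s L k \<Longrightarrow> fscale c f \<in> Gchains s L k"
  by (auto simp: Gchains_def fscale_def)

lemma Gbnd_sub_Gcyc: "Gbnd s L n \<subseteq> Gcyc s L n"
  by (auto simp: Gbnd_def Gcyc_def Gdif_chains Gdif_Gdif)
lemma zero_Gbnd: "0 \<in> Gbnd s L n"
  unfolding Gbnd_def by (rule image_eqI[of _ _ 0]) simp_all

lemma M1: "lc s # r \<in> GB s L k \<longleftrightarrow> (1 \<le> k \<and> 2 \<le> L \<and> r \<in> GB s (L-2) (k-1))"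
  by (auto simp: GB_def composable_Cons)
lemma M2: "la s # la (flp s) # r \<in> GB s L k \<longleftrightarrow> (2 \<le> k \<and> 2 \<le> L \<and> r \<in> GB s (L-2) (k-2))"
  by (auto simp: GB_def composable_Cons)
lemma M3: "la s # lc (flp s) # r \<in> GB s L k \<longleftrightarrow> (2 \<le> k \<and> 3 \<le> L \<and> r \<in> GB (flp s) (L-3) (k-2))"
  by (auto simp: GB_def composable_Cons)
lemma M4: assumes "w \<in> GB s L k" "3 \<le> L"
  shows "(\<exists>r. w = lc s # r) \<or> (\<exists>r. w = la s # la (flp s) # r) \<or> (\<exists>r. w = la s # lc (flp s) # r)"
proof -
  from assms obtain x w' where w: "w = x # w'" by (cases w) (auto simp: GB_def)
  have x: "lidem x = s" "composable (x#w')" "plens (x#w') = L" using assms w by (auto simp: GB_def)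
  from letter_cases_lidem[OF x(1)] show ?thesis
  proof
    assume xa: "x = la s"
    with x assms obtain y r where w': "w' = y # r" by (cases w') auto
    with x xa have "lidem y = flp s" by (auto simp: composable_Cons)
    from letter_cases_lidem[OF this] show ?thesis using w w' xa by auto
  next
    assume "x = lc s" then show ?thesis using w by auto
  qed
qed

lemma SPLIT: assumes "3 \<le> L" "2 \<le> k"
  shows "(\<Sum>w\<in>GB s L k. F w) = (\<Sum>r\<in>GB s (L-2) (k-1). F (lc s # r))
     + (\<Sum>r\<in>GB s (L-2) (k-2). F (la s # la (flp s) # r))
     + (\<Sum>r\<in>GB (flp s) (L-3) (k-2). F (la s # lc (flp s) # r))"
proof -
  let ?A1 = "Cons (lc s) ` GB s (L-2) (k-1)"
  let ?A2 = "(\<lambda>r. la s # la (flp s) # r) ` GB s (L-2) (k-2)"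
  let ?A3 = "(\<lambda>r. la s # lc (flp s) # r) ` GB (flp s) (L-3) (k-2)"
  have E: "GB s L k = ?A1 \<union> ?A2 \<union> ?A3"
  proof
    show "GB s L k \<subseteq> ?A1 \<union> ?A2 \<union> ?A3"
    proof
      fix w assume w: "w \<in> GB s L k"
      from M4[OF w assms(1)] show "w \<in> ?A1 \<union> ?A2 \<union> ?A3"
        using w by (auto simp: M1 M2 M3)
    qed
    show "?A1 \<union> ?A2 \<union> ?A3 \<subseteq> GB s L k" using assms by (auto simp: M1 M2 M3)
  qed
  have "(\<Sum>w\<in>GB s L k. F w) = sum F ?A1 + sum F ?A2 + sum F ?A3"
    unfolding E by (subst sum.union_disjoint; (auto)?)+
  also have "sum F ?A1 = (\<Sum>r\<in>GB s (L-2) (k-1). F (lc s # r))"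
    by (subst sum.reindex) (auto simp: inj_on_def)
  also have "sum F ?A2 = (\<Sum>r\<in>GB s (L-2) (k-2). F (la s # la (flp s) # r))"
    by (subst sum.reindex) (auto simp: inj_on_def)
  also have "sum F ?A3 = (\<Sum>r\<in>GB (flp s) (L-3) (k-2). F (la s # lc (flp s) # r))"
    by (subst sum.reindex) (auto simp: inj_on_def)
  finally show ?thesis .
qed

definition Xproj :: "idem \<Rightarrow> (letter list \<Rightarrow> 'k::field) \<Rightarrow> letter list \<Rightarrow> 'k" where
  "Xproj s F = (\<lambda>r. F (lc s # r))"
definition Yemb :: "idem \<Rightarrow> (letter list \<Rightarrow> 'k::field) \<Rightarrow> letter list \<Rightarrow> 'k" where
  "Yemb s \<rho> = (\<lambda>w. case w of x#y#r \<Rightarrow> if x = la s \<and> y = la (flp s) then \<rho> r else 0 | _ \<Rightarrow> 0)"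
definition Iemb :: "idem \<Rightarrow> (letter list \<Rightarrow> 'k::field) \<Rightarrow> letter list \<Rightarrow> 'k" where
  "Iemb s \<rho> = (\<lambda>w. case w of x#y#r \<Rightarrow> if x = la s \<and> y = lc (flp s) then \<rho> r else 0 | _ \<Rightarrow> 0)"

lemma Yemb_simps[simp]: "Yemb s \<rho> (lc s # r) = 0" "Yemb s \<rho> (la s # la (flp s) # r) = \<rho> r"
  "Yemb s \<rho> (la s # lc (flp s) # r) = 0"
  by (simp_all add: Yemb_def split: list.split)
lemma Iemb_simps[simp]: "Iemb s \<rho> (lc s # r) = 0" "Iemb s \<rho> (la s # la (flp s) # r) = 0"
  "Iemb s \<rho> (la s # lc (flp s) # r) = \<rho> r"
  by (simp_all add: Iemb_def split: list.split)
lemma Xproj_app[simp]: "Xproj s F r = F (lc s # r)" by (simp add: Xproj_def)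

lemma Xproj_chains: "F \<in> Gchains s L k \<Longrightarrow> Xproj s F \<in> Gchains s (L-2) (k-1)"
  by (auto simp: Gchains_iff M1)
lemma Yemb_chains: "\<rho> \<in> Gchains s (L-2) (k-2) \<Longrightarrow> 2 \<le> k \<Longrightarrow> 2 \<le> L \<Longrightarrow> Yemb s \<rho> \<in> Gchains s L k"
  by (auto simp: Gchains_iff Yemb_def M2 split: list.split)
lemma Iemb_chains: "\<rho> \<in> Gchains (flp s) (L-3) (k-2) \<Longrightarrow> 2 \<le> k \<Longrightarrow> 3 \<le> L \<Longrightarrow> Iemb s \<rho> \<in> Gchains s L k"
  by (auto simp: Gchains_iff Iemb_def M3 split: list.split)
lemma Iemb_proj_chains: "F \<in> Gchains s L k \<Longrightarrow> (\<lambda>r. F (la s # lc (flp s) # r)) \<in> Gchains (flp s) (L-3) (k-2)"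
  by (auto simp: Gchains_iff M3)

lemma Iemb_inj: "Iemb s f = Iemb s g \<Longrightarrow> f = g"
proof
  fix r assume "Iemb s f = Iemb s g"
  then have "Iemb s f (la s # lc (flp s) # r) = Iemb s g (la s # lc (flp s) # r)" by simp
  then show "f r = g r" by simp
qed
lemma Iemb_add: "Iemb s (f + g) = Iemb s f + Iemb s g"
  by (auto simp: Iemb_def fun_eq_iff split: list.split)
lemma Iemb_scale: "Iemb s (fscale c f) = fscale c (Iemb s f)"
  by (auto simp: Iemb_def fun_eq_iff fscale_def split: list.split)
lemma Iemb_zero[simp]: "Iemb s 0 = 0"
  by (auto simp: Iemb_def fun_eq_iff split: list.split)

lemma dc_YX: "(dcoef (la s # la (flp s) # r') (lc s # r) :: 'k::field) = (if r' = r then -1 else 0)"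
  by (auto simp: dcoef_Cons D1_def shiftc_def)
lemma dc_IX: "(dcoef (la s # lc (flp s) # r') (lc s # r) :: 'k::field) = 0"
  by (auto simp: dcoef_Cons D1_def shiftc_def)
lemma dc_YY: "(dcoef (la s # la (flp s) # r') (la s # la (flp s) # r) :: 'k::field) = dcoef r' r"
  by (simp add: dcoef_same)
lemma dc_I: "(dcoef (la s # lc (flp s) # r) u :: 'k::field) = Iemb s (dcoef r) u"
  by (auto simp: dcoef_Cons dcoef_lc D1_def shiftc_def Iemb_def split: list.split)

lemma L1: assumes F: "F \<in> Gchains s L k" and "3 \<le> L" "2 \<le> k"
  shows "Gdif s L k F (lc s # r) = - Gdif s (L-2) (k-1) (Xproj s F) r - F (la s # la (flp s) # r)"
proof -
  have "Gdif s L k F (lc s # r) = (\<Sum>r'\<in>GB s (L-2) (k-1). F (lc s # r') * dcoef (lc s # r') (lc s # r))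
     + (\<Sum>r'\<in>GB s (L-2) (k-2). F (la s # la (flp s) # r') * dcoef (la s # la (flp s) # r') (lc s # r))
     + (\<Sum>r'\<in>GB (flp s) (L-3) (k-2). F (la s # lc (flp s) # r') * dcoef (la s # lc (flp s) # r') (lc s # r))"
    unfolding Gdif_def using SPLIT[OF assms(2,3)] by simp
  also have "(\<Sum>r'\<in>GB s (L-2) (k-1). F (lc s # r') * dcoef (lc s # r') (lc s # r)) = - Gdif s (L-2) (k-1) (Xproj s F) r"
    by (simp add: Gdif_def dcoef_same sum_negf)
  also have "(\<Sum>r'\<in>GB s (L-2) (k-2). F (la s # la (flp s) # r') * dcoef (la s # la (flp s) # r') (lc s # r))
      = (\<Sum>r'\<in>GB s (L-2) (k-2). if r' = r then - F (la s # la (flp s) # r') else 0)"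
    by (rule sum.cong) (auto simp: dc_YX)
  also have "\<dots> = - F (la s # la (flp s) # r)"
    using F assms by (auto simp: Gchains_iff M2)
  also have "(\<Sum>r'\<in>GB (flp s) (L-3) (k-2). F (la s # lc (flp s) # r') * dcoef (la s # lc (flp s) # r') (lc s # r)) = 0"
    by (simp add: dc_IX)
  finally show ?thesis by (simp add: Xproj_def)
qed

lemma L2a: assumes "\<rho> \<in> Gchains s (L-2) (k-2)" "3 \<le> L" "2 \<le> k"
  shows "Gdif s L k (Yemb s \<rho>) (lc s # r) = - \<rho> r"
proof -
  have "Xproj s (Yemb s \<rho>) = 0" by (simp add: fun_eq_iff)
  then show ?thesis using L1[OF Yemb_chains[OF assms(1,3)] assms(2,3)] assms by simp
qed

lemma L2b: assumes "3 \<le> L" "2 \<le> k"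
  shows "Gdif s L k (Yemb s \<rho>) (la s # la (flp s) # r) = Gdif s (L-2) (k-2) \<rho> r"
  unfolding Gdif_def SPLIT[OF assms] by (simp add: dc_YY)

lemma L3: assumes "3 \<le> L" "2 \<le> k"
  shows "Gdif s L k (Iemb s \<rho>) = Iemb s (Gdif (flp s) (L-3) (k-2) \<rho>)"
proof
  fix u
  have "Gdif s L k (Iemb s \<rho>) u = (\<Sum>r'\<in>GB (flp s) (L-3) (k-2). \<rho> r' * Iemb s (dcoef r') u)"
    unfolding Gdif_def SPLIT[OF assms] by (simp add: dc_I)
  also have "\<dots> = Iemb s (Gdif (flp s) (L-3) (k-2) \<rho>) u"
    by (auto simp: Iemb_def Gdif_def split: list.split)
  finally show "Gdif s L k (Iemb s \<rho>) u = Iemb s (Gdif (flp s) (L-3) (k-2) \<rho>) u" .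
qed

lemma L4: assumes F: "F \<in> Gchains s L k" and "3 \<le> L"
  and h1: "\<And>r. F (lc s # r) = 0" and h2: "\<And>r. F (la s # la (flp s) # r) = 0"
  shows "F = Iemb s (\<lambda>r. F (la s # lc (flp s) # r))"
proof
  fix w
  show "F w = Iemb s (\<lambda>r. F (la s # lc (flp s) # r)) w"
  proof (cases "\<exists>r. w = la s # lc (flp s) # r")
    case True then show ?thesis by auto
  next
    case False
    have "F w = 0"
    proof (cases "w \<in> GB s L k")
      case True
      from M4[OF True assms(2)] False show ?thesis using h1 h2 by auto
    next
      case False then show ?thesis using F by (auto simp: Gchains_iff)
    qed
    moreover have "Iemb s (\<lambda>r. F (la s # lc (flp s) # r)) w = 0"
      using False by (auto simp: Iemb_def split: list.split)
    ultimately show ?thesis by simp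
  qed
qed

lemma S4: assumes "f \<in> Gcyc s L n" "3 \<le> L" "2 \<le> n"
  shows "\<exists>g \<in> Gchains s L (Suc n). \<exists>f' \<in> Gchains (flp s) (L-3) (n-2). f = Gdif s L (Suc n) g + Iemb s f'"
proof -
  have fc: "f \<in> Gchains s L n" and df: "Gdif s L n f = 0" using assms(1) by (auto simp: Gcyc_def)
  define \<rho> where "\<rho> = - Xproj s f"
  have \<rho>c: "\<rho> \<in> Gchains s (L-2) (Suc n - 2)"
    using Gchains_uminus[OF Xproj_chains[OF fc]] assms by (simp add: \<rho>_def)
  define g where "g = Yemb s \<rho>"
  have gc: "g \<in> Gchains s L (Suc n)" unfolding g_def by (rule Yemb_chains[OF \<rho>c]) (use assms in auto)
  define h where "h = f - Gdif s L (Suc n) g"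
  have hc: "h \<in> Gchains s L n" unfolding h_def by (rule Gchains_diff[OF fc]) (use Gdif_chains in auto)
  have h1: "h (lc s # r) = 0" for r
    using L2a[OF \<rho>c assms(2)] assms by (simp add: h_def g_def \<rho>_def)
  have h2: "h (la s # la (flp s) # r) = 0" for r
  proof -
    have "Gdif s L n f (lc s # r) = 0" using df by simp
    then have A: "f (la s # la (flp s) # r) = - Gdif s (L-2) (n-1) (Xproj s f) r"
      using L1[OF fc assms(2,3)] by simp
    have B: "Gdif s L (Suc n) g (la s # la (flp s) # r) = Gdif s (L-2) (Suc n - 2) \<rho> r"
      unfolding g_def by (rule L2b) (use assms in auto)
    have "Suc n - 2 = n - 1" using assms by simp
    then show ?thesis using A B by (simp add: h_def \<rho>_def Gdif_uminus)
  qed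
  have he: "h = Iemb s (\<lambda>r. h (la s # lc (flp s) # r))" by (rule L4[OF hc assms(2) h1 h2])
  have "f = Gdif s L (Suc n) g + h" by (simp add: h_def)
  then have "f = Gdif s L (Suc n) g + Iemb s (\<lambda>r. h (la s # lc (flp s) # r))" using he by simp
  then show ?thesis using gc Iemb_proj_chains[OF hc] by blast
qed

lemma S5: assumes gc: "g \<in> Gchains s L (Suc n)" and dg: "Gdif s L (Suc n) g = Iemb s z" and "3 \<le> L" "2 \<le> n"
  shows "z \<in> Gbnd (flp s) (L-3) (n-2)"
proof -
  define \<rho> where "\<rho> = - Xproj s g"
  have \<rho>c: "\<rho> \<in> Gchains s (L-2) (Suc (Suc n) - 2)"
    using Gchains_uminus[OF Xproj_chains[OF gc]] assms by (simp add: \<rho>_def)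
  define h0 where "h0 = Yemb s \<rho>"
  define g1 where "g1 = g - Gdif s L (Suc (Suc n)) h0"
  have g1c: "g1 \<in> Gchains s L (Suc n)" unfolding g1_def by (rule Gchains_diff[OF gc]) (use Gdif_chains in auto)
  have h1: "g1 (lc s # r) = 0" for r
    using L2a[OF \<rho>c assms(3)] assms by (simp add: g1_def h0_def \<rho>_def)
  have h2: "g1 (la s # la (flp s) # r) = 0" for r
  proof -
    have "Gdif s L (Suc n) g (lc s # r) = 0" using dg by simp
    then have A: "g (la s # la (flp s) # r) = - Gdif s (L-2) n (Xproj s g) r"
      using L1[OF gc assms(3)] assms by simp
    have B: "Gdif s L (Suc (Suc n)) h0 (la s # la (flp s) # r) = Gdif s (L-2) n \<rho> r"
      unfolding h0_def using L2b[of L "Suc (Suc n)" s \<rho> r] assms by simp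
    show ?thesis using A B by (simp add: g1_def \<rho>_def Gdif_uminus)
  qed
  define g' where "g' = (\<lambda>r. g1 (la s # lc (flp s) # r))"
  have g1e: "g1 = Iemb s g'" unfolding g'_def by (rule L4[OF g1c assms(3) h1 h2])
  have g'c: "g' \<in> Gchains (flp s) (L-3) (Suc (n-2))"
  proof -
    have e: "Suc (n-2) = Suc n - 2" using assms by simp
    show ?thesis unfolding e g'_def by (rule Iemb_proj_chains[OF g1c])
  qed
  have "Gdif s L (Suc n) g1 = Gdif s L (Suc n) g" by (simp add: g1_def Gdif_diff Gdif_Gdif)
  also have "Gdif s L (Suc n) g1 = Iemb s (Gdif (flp s) (L-3) (Suc n - 2) g')"
    unfolding g1e by (rule L3) (use assms in auto)
  finally have "Iemb s (Gdif (flp s) (L-3) (Suc n - 2) g') = Iemb s z" using dg by simp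
  then have "z = Gdif (flp s) (L-3) (Suc (n-2)) g'" using assms Iemb_inj by (metis Suc_diff_le diff_Suc_Suc)
  then show ?thesis using g'c by (simp add: Gbnd_def)
qed

lemma BI: assumes "b \<in> Gbnd (flp s) (L-3) (n-2)" "3 \<le> L" "2 \<le> n"
  shows "Iemb s b \<in> Gbnd s L n"
proof -
  from assms(1) obtain g where g: "g \<in> Gchains (flp s) (L-3) (Suc (n-2))" "b = Gdif (flp s) (L-3) (Suc (n-2)) g"
    by (auto simp: Gbnd_def)
  have e: "Suc n - 2 = Suc (n-2)" using assms by simp
  have "Iemb s g \<in> Gchains s L (Suc n)" by (rule Iemb_chains) (use g e assms in auto)
  moreover have "Gdif s L (Suc n) (Iemb s g) = Iemb s b"
    using L3[of L "Suc n" s g] assms e g by simp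
  ultimately show ?thesis unfolding Gbnd_def by (metis image_eqI)
qed

lemma Gbnd_add: "b1 \<in> Gbnd s L n \<Longrightarrow> b2 \<in> Gbnd s L n \<Longrightarrow> b1 + b2 \<in> Gbnd s L n"
  unfolding Gbnd_def by (auto simp: Gdif_add[symmetric] intro!: image_eqI Gchains_add)
lemma Gbnd_scale: "b \<in> Gbnd s L n \<Longrightarrow> fscale c b \<in> Gbnd s L n"
  unfolding Gbnd_def by (auto simp: Gdif_scale[symmetric] intro!: image_eqI Gchains_scale)

definition hom0 :: "'k::field itself \<Rightarrow> idem \<Rightarrow> nat \<Rightarrow> nat \<Rightarrow> bool" where
  "hom0 _ s L n \<longleftrightarrow> (Gcyc s L n :: (letter list \<Rightarrow> 'k) set) \<subseteq> Gbnd s L n"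
definition hom1 :: "'k::field itself \<Rightarrow> idem \<Rightarrow> nat \<Rightarrow> nat \<Rightarrow> bool" where
  "hom1 _ s L n \<longleftrightarrow> (\<exists>z::letter list \<Rightarrow> 'k. z \<in> Gcyc s L n \<and> z \<notin> Gbnd s L n \<and>
      Gcyc s L n \<subseteq> {b + fscale c z | b c. b \<in> Gbnd s L n})"

lemma CYC': assumes "f \<in> Gcyc s L n" "3 \<le> L" "2 \<le> n"
  shows "\<exists>b\<in>Gbnd s L n. \<exists>f'\<in>Gcyc (flp s) (L-3) (n-2). f = b + Iemb s f'"
proof -
  obtain g f' where g: "g \<in> Gchains s L (Suc n)" and f': "f' \<in> Gchains (flp s) (L-3) (n-2)"
    and fe: "f = Gdif s L (Suc n) g + Iemb s f'"
    using S4[OF assms] by blast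
  have "Iemb s (Gdif (flp s) (L-3) (n-2) f') = Gdif s L n (Iemb s f')"
    using L3[of L n s f'] assms by simp
  also have "Iemb s f' = f - Gdif s L (Suc n) g" using fe by simp
  also have "Gdif s L n (f - Gdif s L (Suc n) g) = 0"
    using assms(1) by (simp add: Gdif_diff Gdif_Gdif Gcyc_def)
  finally have "Gdif (flp s) (L-3) (n-2) f' = 0" using Iemb_inj[of s _ 0] by simp
  then have "f' \<in> Gcyc (flp s) (L-3) (n-2)" using f' by (simp add: Gcyc_def)
  moreover have "Gdif s L (Suc n) g \<in> Gbnd s L n" using g by (simp add: Gbnd_def)
  ultimately show ?thesis using fe by blast
qed

lemma REC0: assumes "hom0 TYPE('k::field) (flp s) (L-3) (n-2)" "3 \<le> L" "2 \<le> n"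
  shows "hom0 TYPE('k) s L n"
  unfolding hom0_def
proof
  fix f :: "letter list \<Rightarrow> 'k" assume "f \<in> Gcyc s L n"
  then obtain b f' where b: "b \<in> Gbnd s L n" and f': "f' \<in> Gcyc (flp s) (L-3) (n-2)" and fe: "f = b + Iemb s f'"
    using CYC'[OF _ assms(2,3)] by blast
  have "f' \<in> Gbnd (flp s) (L-3) (n-2)" using assms(1) f' by (auto simp: hom0_def)
  then have "Iemb s f' \<in> Gbnd s L n" using BI assms by blast
  then show "f \<in> Gbnd s L n" using b fe Gbnd_add by blast
qed

lemma REC1: assumes "hom1 TYPE('k::field) (flp s) (L-3) (n-2)" "3 \<le> L" "2 \<le> n"
  shows "hom1 TYPE('k) s L n"
proof -
  obtain z' :: "letter list \<Rightarrow> 'k" where z'c: "z' \<in> Gcyc (flp s) (L-3) (n-2)" and z'b: "z' \<notin> Gbnd (flp s) (L-3) (n-2)"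
    and sp: "Gcyc (flp s) (L-3) (n-2) \<subseteq> {b + fscale c z' | b c. b \<in> Gbnd (flp s) (L-3) (n-2)}"
    using assms(1) by (auto simp: hom1_def)
  define z where "z = Iemb s z'"
  have zc: "z \<in> Gcyc s L n"
  proof -
    have "z \<in> Gchains s L n" unfolding z_def by (rule Iemb_chains) (use z'c assms in \<open>auto simp: Gcyc_def\<close>)
    moreover have "Gdif s L n z = 0" unfolding z_def using L3[of L n s z'] assms z'c by (simp add: Gcyc_def)
    ultimately show ?thesis by (simp add: Gcyc_def)
  qed
  have zb: "z \<notin> Gbnd s L n"
  proof
    assume "z \<in> Gbnd s L n"
    then obtain g where "g \<in> Gchains s L (Suc n)" "Gdif s L (Suc n) g = Iemb s z'" by (auto simp: Gbnd_def z_def)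
    then have "z' \<in> Gbnd (flp s) (L-3) (n-2)" using S5 assms by blast
    with z'b show False by simp
  qed
  have "Gcyc s L n \<subseteq> {b + fscale c z | b c. b \<in> Gbnd s L n}"
  proof
    fix f :: "letter list \<Rightarrow> 'k" assume "f \<in> Gcyc s L n"
    then obtain b f' where b: "b \<in> Gbnd s L n" and f': "f' \<in> Gcyc (flp s) (L-3) (n-2)" and fe: "f = b + Iemb s f'"
      using CYC'[OF _ assms(2,3)] by blast
    from f' sp obtain b' c where b': "b' \<in> Gbnd (flp s) (L-3) (n-2)" and f'e: "f' = b' + fscale c z'" by blast
    have "Iemb s b' \<in> Gbnd s L n" using BI b' assms by blast
    then have "b + Iemb s b' \<in> Gbnd s L n" using b Gbnd_add by blast
    moreover have "f = (b + Iemb s b') + fscale c z" using fe f'e by (simp add: Iemb_add Iemb_scale z_def add.assoc)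
    ultimately show "f \<in> {b + fscale c z | b c. b \<in> Gbnd s L n}" by blast
  qed
  then show ?thesis using zc zb by (auto simp: hom1_def)
qed

lemma plens_bounds: "length w \<le> plens w \<and> plens w \<le> 2 * length w"
proof (induction w)
  case (Cons x w) then show ?case by (cases x) auto
qed simp

lemma GB_empty: assumes "n > L \<or> L > 2 * n" shows "GB s L n = {}"
proof -
  { fix w assume "w \<in> GB s L n"
    then have "length w = n" "plens w = L" by (auto simp: GB_def)
    with plens_bounds[of w] assms have False by linarith }
  then show ?thesis by blast
qed

definition delta :: "letter list \<Rightarrow> letter list \<Rightarrow> 'k::field" where
  "delta w0 = (\<lambda>w. if w = w0 then 1 else 0)"

lemma Gdif_empty: "GB s L k = {} \<Longrightarrow> Gdif s L k = (\<lambda>f. 0)"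
  by (simp add: Gdif_def fun_eq_iff)

lemma hom0_empty: assumes "GB s L n = {}" shows "hom0 TYPE('k::field) s L n"
  unfolding hom0_def
proof
  fix f :: "letter list \<Rightarrow> 'k" assume "f \<in> Gcyc s L n"
  then have "f = 0" using assms by (auto simp: Gcyc_def Gchains_def fun_eq_iff)
  then show "f \<in> Gbnd s L n" using zero_Gbnd by simp
qed

lemma chains_single: "GB s L n = {w0} \<Longrightarrow> f \<in> Gchains s L n \<Longrightarrow> f = fscale (f w0) (delta w0)"
  by (auto simp: Gchains_iff fscale_def delta_def fun_eq_iff)

lemma hom1_single: assumes G: "GB s L n = {w0}" and G1: "GB s L (Suc n) = {}" and l: "length w0 \<le> 1"
  shows "hom1 TYPE('k::field) s L n"
proof -
  have B: "Gbnd s L n = {0 :: letter list \<Rightarrow> 'k}"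
    unfolding Gbnd_def Gdif_empty[OF G1] using Gchains_zero by blast
  have dz: "Gdif s L n f = 0" for f :: "letter list \<Rightarrow> 'k"
    using l by (simp add: Gdif_def G fun_eq_iff dcoef_short)
  have "(delta w0 :: letter list \<Rightarrow> 'k) \<in> Gchains s L n" by (auto simp: Gchains_def delta_def G)
  then have "(delta w0 :: letter list \<Rightarrow> 'k) \<in> Gcyc s L n" by (simp add: Gcyc_def dz)
  moreover have "(delta w0 :: letter list \<Rightarrow> 'k) \<notin> Gbnd s L n" by (auto simp: B delta_def fun_eq_iff)
  moreover have "Gcyc s L n \<subseteq> {b + fscale c (delta w0 :: letter list \<Rightarrow> 'k) | b c. b \<in> Gbnd s L n}"
  proof
    fix f :: "letter list \<Rightarrow> 'k" assume "f \<in> Gcyc s L n"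
    then have "f \<in> Gchains s L n" by (simp add: Gcyc_def)
    then have "f = 0 + fscale (f w0) (delta w0)" using chains_single[OF G] by simp
    then show "f \<in> {b + fscale c (delta w0) | b c. b \<in> Gbnd s L n}" using B by blast
  qed
  ultimately show ?thesis unfolding hom1_def by blast
qed

lemma GB00: "GB s 0 0 = {[]}" by (auto simp: GB_def)
lemma GB11: "GB s 1 1 = {[la s]}"
proof -
  have "w \<in> GB s 1 1 \<Longrightarrow> w = [la s]" for w
  proof -
    assume w: "w \<in> GB s 1 1"
    then obtain x where x: "w = [x]" by (auto simp: GB_def length_Suc_conv)
    then have "lidem x = s" "plen x = 1" using w by (auto simp: GB_def)
    then show ?thesis using x by (cases x; cases s) auto
  qed
  then show ?thesis by (auto simp: GB_def)
qed
lemma GB21: "GB s 2 1 = {[lc s]}"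
proof -
  have "w \<in> GB s 2 1 \<Longrightarrow> w = [lc s]" for w
  proof -
    assume w: "w \<in> GB s 2 1"
    then obtain x where x: "w = [x]" by (auto simp: GB_def length_Suc_conv)
    then have "lidem x = s" "plen x = 2" using w by (auto simp: GB_def)
    then show ?thesis using x by (cases x; cases s) auto
  qed
  then show ?thesis by (auto simp: GB_def)
qed
lemma GB22: "GB s 2 2 = {[la s, la (flp s)]}"
proof -
  have "w \<in> GB s 2 2 \<Longrightarrow> w = [la s, la (flp s)]" for w
  proof -
    assume w: "w \<in> GB s 2 2"
    then obtain x y where x: "w = [x,y]" by (auto simp: GB_def length_Suc_conv numeral_2_eq_2)
    then have "lidem x = s" "plen x + plen y = 2" "ridem x = lidem y" using w by (auto simp: GB_def composable_Cons)
    moreover have "plen x \<ge> 1" "plen y \<ge> 1" by (cases x; simp; cases y; simp)+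
    ultimately show ?thesis using x by (cases x; cases y; cases s) auto
  qed
  then show ?thesis by (auto simp: GB_def composable_Cons)
qed

lemma dcoef_ab: "(dcoef [la s, la (flp s)] u :: 'k::field) = - delta [lc s] u"
  by (simp add: dcoef_Cons D1_def delta_def shiftc_def split: list.split)

lemma hom0_21: "hom0 TYPE('k::field) s 2 1"
  unfolding hom0_def
proof
  fix f :: "letter list \<Rightarrow> 'k" assume "f \<in> Gcyc s 2 1"
  then have "f \<in> Gchains s 2 1" by (simp add: Gcyc_def)
  then have fe: "f = fscale (f [lc s]) (delta [lc s])" using chains_single[OF GB21] by blast
  have "Gdif s 2 2 (fscale (- f [lc s]) (delta [la s, la (flp s)])) = f"
    by (subst fe) (simp add: Gdif_def GB22 fscale_def delta_def dcoef_ab fun_eq_iff)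
  moreover have "fscale (- f [lc s]) (delta [la s, la (flp s)]) \<in> Gchains s 2 2"
    by (auto simp: Gchains_def fscale_def delta_def GB22)
  ultimately show "f \<in> Gbnd s 2 1" unfolding Gbnd_def by (metis numeral_2_eq_2 One_nat_def image_eqI)
qed

lemma hom0_22: "hom0 TYPE('k::field) s 2 2"
  unfolding hom0_def
proof
  fix f :: "letter list \<Rightarrow> 'k" assume f: "f \<in> Gcyc s 2 2"
  then have "f \<in> Gchains s 2 2" by (simp add: Gcyc_def)
  then have fe: "f = fscale (f [la s, la (flp s)]) (delta [la s, la (flp s)])"
    using chains_single[OF GB22] by blast
  have "Gdif s 2 2 f [lc s] = 0" using f by (simp add: Gcyc_def)
  then have "f [la s, la (flp s)] = 0" by (simp add: Gdif_def GB22 dcoef_ab delta_def)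
  then have "f = 0" using fe by (simp add: fscale_def fun_eq_iff)
  then show "f \<in> Gbnd s 2 2" using zero_Gbnd by simp
qed

lemma sum_fun_app: "(\<Sum>w\<in>A. F w) u = (\<Sum>w\<in>A. F w u)" for F :: "_ \<Rightarrow> _ \<Rightarrow> 'k::field"
  by (induction A rule: infinite_finite_induct) auto

lemma dim0: "hom0 TYPE('k::field) s L n \<Longrightarrow>
  vector_space.dim (fscale :: 'k \<Rightarrow> _) (Gcyc s L n :: (letter list \<Rightarrow> 'k) set)
  - vector_space.dim (fscale :: 'k \<Rightarrow> _) (Gbnd s L n :: (letter list \<Rightarrow> 'k) set) = 0"
proof -
  assume "hom0 TYPE('k::field) s L n"
  moreover have "Gbnd s L n \<subseteq> (Gcyc s L n :: (letter list \<Rightarrow> 'k) set)" by (rule Gbnd_sub_Gcyc)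
  ultimately have "(Gcyc s L n :: (letter list \<Rightarrow> 'k) set) = Gbnd s L n" by (auto simp: hom0_def)
  then show ?thesis by simp
qed

lemma dim1: assumes H: "hom1 TYPE('k::field) s L n"
  shows "vector_space.dim (fscale :: 'k \<Rightarrow> _) (Gcyc s L n :: (letter list \<Rightarrow> 'k) set)
  - vector_space.dim (fscale :: 'k \<Rightarrow> _) (Gbnd s L n :: (letter list \<Rightarrow> 'k) set) = 1"
proof -
  interpret V: vector_space "fscale :: 'k \<Rightarrow> (letter list \<Rightarrow> 'k) \<Rightarrow> _" by (rule vector_space_fscale)
  obtain z :: "letter list \<Rightarrow> 'k" where zc: "z \<in> Gcyc s L n" and zb: "z \<notin> Gbnd s L n"
    and sp: "Gcyc s L n \<subseteq> {b + fscale c z | b c. b \<in> Gbnd s L n}"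
    using H by (auto simp: hom1_def)
  let ?B = "Gbnd s L n :: (letter list \<Rightarrow> 'k) set"
  have sub: "V.subspace ?B"
    unfolding V.subspace_def using zero_Gbnd Gbnd_add Gbnd_scale by blast
  then have spB: "V.span ?B = ?B" by simp
  have chspan: "Gchains s L n \<subseteq> V.span (delta ` GB s L n)"
  proof
    fix f :: "letter list \<Rightarrow> 'k" assume f: "f \<in> Gchains s L n"
    have "f = (\<Sum>w\<in>GB s L n. fscale (f w) (delta w))"
    proof
      fix u
      have "(\<Sum>w\<in>GB s L n. fscale (f w) (delta w)) u = (\<Sum>w\<in>GB s L n. if w = u then f u else 0)"
        unfolding sum_fun_app by (rule sum.cong) (auto simp: fscale_def delta_def)
      also have "\<dots> = f u" using f by (auto simp: Gchains_iff)
      finally show "f u = (\<Sum>w\<in>GB s L n. fscale (f w) (delta w)) u" by simp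
    qed
    also have "\<dots> \<in> V.span (delta ` GB s L n)"
      by (intro V.span_sum V.span_scale V.span_base) auto
    finally show "f \<in> V.span (delta ` GB s L n)" .
  qed
  obtain K where K: "K \<subseteq> ?B" "V.independent K" "?B \<subseteq> V.span K" "card K = V.dim ?B"
    using V.basis_exists by blast
  have "?B \<subseteq> Gchains s L n" using Gbnd_sub_Gcyc by (auto simp: Gcyc_def)
  then have "K \<subseteq> V.span (delta ` GB s L n)" using K(1) chspan by blast
  then have Kf: "finite K" using V.independent_span_bound[of "delta ` GB s L n" K] K(2) by auto
  have spK: "V.span K = ?B"
    using K(1,3) V.span_mono[OF K(1)] spB by blast
  have zK: "z \<notin> V.span K" using zb spK by simp
  have "V.dim (Gcyc s L n) = card (insert z K)"
  proof (rule V.dim_unique)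
    show "insert z K \<subseteq> Gcyc s L n" using zc K(1) Gbnd_sub_Gcyc by blast
    show "Gcyc s L n \<subseteq> V.span (insert z K)"
    proof
      fix f :: "letter list \<Rightarrow> 'k" assume "f \<in> Gcyc s L n"
      with sp obtain b c where b: "b \<in> ?B" and fe: "f = b + fscale c z" by blast
      have "b \<in> V.span (insert z K)" using b spK V.span_mono[of K "insert z K"] by blast
      moreover have "fscale c z \<in> V.span (insert z K)" by (intro V.span_scale V.span_base) simp
      ultimately show "f \<in> V.span (insert z K)" using fe V.span_add by simp
    qed
    show "V.independent (insert z K)" using V.independent_insertI[OF zK K(2)] .
  qed simp
  also have "\<dots> = card K + 1"
  proof -
    have "z \<notin> K" using zK V.span_base[of z K] by blast
    then show ?thesis using Kf by (simp add: card_insert_disjoint)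
  qed
  finally show ?thesis using K(4) by simp
qed



lemma T2: assumes "3 \<le> L" "2 \<le> (n::nat)" shows "(2*(L-3) + (n-2) mod 2 = 3*(n-2)) = (2*L + n mod 2 = 3*n)"
proof -
  obtain L' n' where e: "L = L' + 3" "n = n' + 2" using assms by (metis le_add_diff_inverse2)
  have "(n'+2) mod 2 = n' mod 2" by simp
  then show ?thesis using e by simp
qed

lemma T3: "n > L \<or> L > 2 * (n::nat) \<Longrightarrow> 2*L + n mod 2 \<noteq> 3*n"
  using mod_less_divisor[of 2 n] by linarith

lemma T1: assumes "\<not>(3 \<le> L \<and> 2 \<le> (n::nat))" "\<not> (n > L \<or> L > 2 * n)"
  shows "(n = 0 \<and> L = 0) \<or> (n = 1 \<and> L = 1) \<or> (n = 1 \<and> L = 2) \<or> (n = 2 \<and> L = 2)"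
proof -
  have "L \<le> 2" using assms by linarith
  then have "L = 0 \<or> L = 1 \<or> L = 2" by linarith
  then show ?thesis using assms by auto
qed

lemma ARITH: assumes "1 \<le> t" "t \<le> (n::nat)"
  shows "(2*(2*(n-t)+1) + n mod 2 = 3*n) \<longleftrightarrow> (n = 4*t-3 \<or> n = 4*t-2)"
proof (cases "even n")
  case True
  then have "n mod 2 = 0" by simp
  then show ?thesis using assms True by auto
next
  case False
  then have "n mod 2 = 1" by (simp add: odd_iff_mod_2_eq_one)
  then show ?thesis using assms False by auto
qed

lemma MAIN: "\<forall>s L. (2*L + n mod 2 = 3*n \<longrightarrow> hom1 TYPE('k::field) s L n) \<and> (2*L + n mod 2 \<noteq> 3*n \<longrightarrow> hom0 TYPE('k) s L n)"
proof (induction n rule: less_induct)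
  case (less n)
  show ?case
  proof (intro allI)
    fix s L
    show "(2*L + n mod 2 = 3*n \<longrightarrow> hom1 TYPE('k::field) s L n) \<and> (2*L + n mod 2 \<noteq> 3*n \<longrightarrow> hom0 TYPE('k) s L n)"
    proof (cases "3 \<le> L \<and> 2 \<le> n")
      case True
      have lt: "n - 2 < n" using True by simp
      have IH: "(2*(L-3) + (n-2) mod 2 = 3*(n-2) \<longrightarrow> hom1 TYPE('k) (flp s) (L-3) (n-2))
         \<and> (2*(L-3) + (n-2) mod 2 \<noteq> 3*(n-2) \<longrightarrow> hom0 TYPE('k) (flp s) (L-3) (n-2))"
        using less[OF lt] by blast
      have eq: "(2*(L-3) + (n-2) mod 2 = 3*(n-2)) = (2*L + n mod 2 = 3*n)" using True T2 by blast
      show ?thesis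
      proof (intro conjI impI)
        assume "2*L + n mod 2 = 3*n"
        then show "hom1 TYPE('k) s L n" using IH eq REC1[of s L n] True by blast
      next
        assume "2*L + n mod 2 \<noteq> 3*n"
        then show "hom0 TYPE('k) s L n" using IH eq REC0[of s L n] True by blast
      qed
    next
      case False
      show ?thesis
      proof (cases "n > L \<or> L > 2 * n")
        case True
        then have "2*L + n mod 2 \<noteq> 3*n" by (rule T3)
        then show ?thesis using hom0_empty[OF GB_empty[OF True]] by blast
      next
        case nb: False
        from T1[OF False nb] consider "n = 0" "L = 0" | "n = 1" "L = 1" | "n = 1" "L = 2" | "n = 2" "L = 2"
          by blast
        then show ?thesis
        proof cases
          case 1
          have "GB s 0 (Suc 0) = {}" by (rule GB_empty) simp
          then show ?thesis using hom1_single[of s 0 0 "[]"] GB00 1 by simp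
        next
          case 2
          have "GB s 1 (Suc 1) = {}" by (rule GB_empty) simp
          then show ?thesis using hom1_single[of s 1 1 "[la s]"] GB11 2 by simp
        next
          case 3 then show ?thesis using hom0_21 by simp
        next
          case 4 then show ?thesis using hom0_22 by simp
        qed
      qed
    qed
  qed
qed

lemma wdeg_Nil[simp]: "wdeg [] = 0" and wdeg_Cons[simp]: "wdeg (x#r) = ldeg x + wdeg r"
  by (simp_all add: wdeg_def)

lemma path: "composable w \<Longrightarrow> w \<noteq> [] \<Longrightarrow>
  ridem (last w) = (if even (plens w) then lidem (hd w) else flp (lidem (hd w)))
  \<and> wdeg w = (plens w + (if lidem (hd w) = IdL then 1 else 0)) div 2"
proof (induction w)
  case (Cons x r)
  show ?case
  proof (cases "r = []")
    case True then show ?thesis by (cases x) auto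
  next
    case False
    have c: "ridem x = lidem (hd r)" "composable r" using Cons.prems False by (auto simp: composable_Cons)
    have IH: "ridem (last r) = (if even (plens r) then lidem (hd r) else flp (lidem (hd r)))"
      "wdeg r = (plens r + (if lidem (hd r) = IdL then 1 else 0)) div 2"
      using Cons.IH[OF c(2) False] by auto
    show ?thesis using c(1) IH False by (cases x) auto
  qed
qed simp

lemma cbasis_GB: "cbasis n m = GB IdO (2*m+1) n"
proof (intro set_eqI iffI)
  fix w assume w: "w \<in> cbasis n m"
  then have h: "composable w" "w \<noteq> []" "lidem (hd w) = IdO" "ridem (last w) = IdL" "wdeg w = m" "length w = n"
    by (auto simp: cbasis_def)
  from path[OF h(1,2)] h have "odd (plens w)" "plens w div 2 = m" by (auto split: if_splits)
  then have "plens w = 2*m+1" by presburger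
  then show "w \<in> GB IdO (2*m+1) n" using h by (auto simp: GB_def)
next
  fix w assume w: "w \<in> GB IdO (2*m+1) n"
  then have h: "composable w" "plens w = 2*m+1" "length w = n" "w \<noteq> [] \<longrightarrow> lidem (hd w) = IdO"
    by (auto simp: GB_def)
  then have ne: "w \<noteq> []" by auto
  from path[OF h(1) ne] h ne show "w \<in> cbasis n m" by (auto simp: cbasis_def)
qed

lemma HD: "homology_dim TYPE('k::field) n m = (if 2*(2*m+1) + n mod 2 = 3*n then 1 else 0)"
proof -
  have c: "(cycles n m :: (letter list \<Rightarrow> 'k) set) = Gcyc IdO (2*m+1) n"
    by (simp add: cycles_def Gcyc_def chains_def Gchains_def dif_def Gdif_def cbasis_GB)
  have b: "(boundaries n m :: (letter list \<Rightarrow> 'k) set) = Gbnd IdO (2*m+1) n"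
    by (simp add: boundaries_def Gbnd_def chains_def Gchains_def dif_def[abs_def] Gdif_def[abs_def] cbasis_GB)
  show ?thesis
  proof (cases "2*(2*m+1) + n mod 2 = 3*n")
    case True
    then have "hom1 TYPE('k) IdO (2*m+1) n" using MAIN[where 'k='k, of n] by blast
    then show ?thesis unfolding homology_dim_def c b using dim1[where 'k='k] True by simp
  next
    case False
    then have "hom0 TYPE('k) IdO (2*m+1) n" using MAIN[where 'k='k, of n] by blast
    then show ?thesis unfolding homology_dim_def c b using dim0[where 'k='k] False by simp
  qed
qed

theorem mainTheorem7:
  assumes "CHAR('k::field) \<noteq> 2" and "CHAR('k) \<noteq> 3"
  shows "\<forall>n\<ge>1.
      homology_dim TYPE('k) n (n - 1) = (if n \<in> {1, 2} then 1 else 0)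
    \<and> (n \<ge> 2 \<longrightarrow> homology_dim TYPE('k) n (n - 2) = (if n \<in> {5, 6} then 1 else 0))
    \<and> (n \<ge> 3 \<longrightarrow> homology_dim TYPE('k) n (n - 3) = (if n \<in> {9, 10} then 1 else 0))
    \<and> (n \<ge> 4 \<longrightarrow> homology_dim TYPE('k) n (n - 4) = (if n \<in> {13, 14} then 1 else 0))"
proof (intro allI impI)
  fix n :: nat assume n: "1 \<le> n"
  have A: "homology_dim TYPE('k) n (n-t) = (if n = 4*t-3 \<or> n = 4*t-2 then 1 else 0)"
    if "1 \<le> t" "t \<le> n" for t
    using HD[where 'k='k, of n "n-t"] ARITH[OF that] by simp
  show "homology_dim TYPE('k) n (n - 1) = (if n \<in> {1, 2} then 1 else 0)
    \<and> (n \<ge> 2 \<longrightarrow> homology_dim TYPE('k) n (n - 2) = (if n \<in> {5, 6} then 1 else 0))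
    \<and> (n \<ge> 3 \<longrightarrow> homology_dim TYPE('k) n (n - 3) = (if n \<in> {9, 10} then 1 else 0))
    \<and> (n \<ge> 4 \<longrightarrow> homology_dim TYPE('k) n (n - 4) = (if n \<in> {13, 14} then 1 else 0))"
    using A[of 1] A[of 2] A[of 3] A[of 4] n by auto
qed

end
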